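(* Let $X$ be a $t$-dependent vector field on $\mathbb{R}^{n_0}$ admitting a mixed superposition rule $(\Phi,X_{(1)},\dots,X_{(m)})$, $\Phi:\mathbb{R}^{n_1}\times\cdots\times\mathbb{R}^{n_m}\times\mathbb{R}^{n_0}\to\mathbb{R}^{n_0}$, where $X_{(1)},\dots,X_{(m)}$ are Lie systems on $\mathbb{R}^{n_1},\dots,\mathbb{R}^{n_m}$. Suppose that for some $k\in\mathbb{R}^{n_0}$ the map $\Phi_k:(x_{(1)},\dots,x_{(m)})\mapsto\Phi(x_{(1)},\dots,x_{(m)};k)$ has open and dense image in $\mathbb{R}^{n_0}$. Let $\widehat X=X_{(1)}\times\cdots\times X_{(m)}$. Then $\widehat X$ is a Lie system, every element of $V^{\widehat X}$ is $\Phi_k$-projectable (it is $\Phi_k$-related to a vector field on $\mathbb{R}^{n_0}$), and the tangent map of $\Phi_k$ induces a Lie algebra epimorphism $\Phi_{k*}:V^{\widehat X}\to V^X$; in particular $X^t=\Phi_{k*}\widehat X^t$ for all $t$.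
   Context: All objects are real and smooth. A $t$-dependent vector field $X$ on $\mathbb{R}^n$ is a smooth family $\{X^t\}_{t\in\mathbb{R}}$ of vector fields; its particular solutions are solutions of $dx/dt=X(t,x)$. $V^X={\rm Lie}(\{X^t\}_{t\in\mathbb{R}})$ is the smallest real Lie algebra of vector fields containing all $X^t$; $X$ is a Lie system iff $V^X$ is finite-dimensional. The direct product of $X_{(a)}$ on $\mathbb{R}^{n_a}$ is $\sum_a\sum_i X^i_{(a)}(t,x_{(a)})\partial/\partial x^i_{(a)}$ on the product space. A mixed superposition rule $(\Phi,X_{(1)},\dots,X_{(m)})$ for $X$: a $t$-independent map $\Phi$ such that the general solution of $X$ is $x(t)=\Phi(x_{(1)}(t),\dots,x_{(m)}(t);k)$ for a generic family of particular solutions $x_{(a)}(t)$ of $X_{(a)}$ and constants $k\in\mathbb{R}^{n_0}$ (with $k\mapsto\Phi(p;k)$ a local diffeomorphism for generic $p$). *)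

theory Defs
  imports "HOL-Analysis.Analysis"
begin

fun smooth_upto :: "nat \<Rightarrow> ('a::euclidean_space \<Rightarrow> 'b::euclidean_space) \<Rightarrow> bool" where
  "smooth_upto 0 f = True"
| "smooth_upto (Suc k) f =
     ((\<forall>x. f differentiable (at x)) \<and>
      (\<forall>v. smooth_upto k (\<lambda>x. frechet_derivative f (at x) v)))"

definition smooth :: "('a::euclidean_space \<Rightarrow> 'b::euclidean_space) \<Rightarrow> bool" where
  "smooth f \<longleftrightarrow> (\<forall>k. smooth_upto k f)"

definition vector_field :: "('a::euclidean_space \<Rightarrow> 'a) \<Rightarrow> bool" where
  "vector_field Y \<longleftrightarrow> smooth Y"

definition tdep_vector_field :: "(real \<Rightarrow> 'a::euclidean_space \<Rightarrow> 'a) \<Rightarrow> bool" where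
  "tdep_vector_field X \<longleftrightarrow> smooth (\<lambda>(t, x). X t x)"

definition lie_bracket :: "('a::euclidean_space \<Rightarrow> 'a) \<Rightarrow> ('a \<Rightarrow> 'a) \<Rightarrow> ('a \<Rightarrow> 'a)" where
  "lie_bracket Y Z = (\<lambda>x. frechet_derivative Z (at x) (Y x) - frechet_derivative Y (at x) (Z x))"

inductive_set lie_gen :: "('a::euclidean_space \<Rightarrow> 'a) set \<Rightarrow> ('a \<Rightarrow> 'a) set"
  for S where
  base: "Y \<in> S \<Longrightarrow> Y \<in> lie_gen S"
| zero: "(\<lambda>x. 0) \<in> lie_gen S"
| add: "Y \<in> lie_gen S \<Longrightarrow> Z \<in> lie_gen S \<Longrightarrow> (\<lambda>x. Y x + Z x) \<in> lie_gen S"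
| scale: "Y \<in> lie_gen S \<Longrightarrow> (\<lambda>x. c *\<^sub>R Y x) \<in> lie_gen S"
| bracket: "Y \<in> lie_gen S \<Longrightarrow> Z \<in> lie_gen S \<Longrightarrow> lie_bracket Y Z \<in> lie_gen S"

definition VX :: "(real \<Rightarrow> 'a::euclidean_space \<Rightarrow> 'a) \<Rightarrow> ('a \<Rightarrow> 'a) set" where
  "VX X = lie_gen (range X)"

definition fin_dim_fields :: "('a \<Rightarrow> 'b::real_vector) set \<Rightarrow> bool" where
  "fin_dim_fields L \<longleftrightarrow>
     (\<exists>B. finite B \<and> (\<forall>Y\<in>L. \<exists>c. Y = (\<lambda>x. \<Sum>b\<in>B. c b *\<^sub>R b x)))"

definition lie_system :: "(real \<Rightarrow> 'a::euclidean_space \<Rightarrow> 'a) \<Rightarrow> bool" where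
  "lie_system X \<longleftrightarrow> tdep_vector_field X \<and> fin_dim_fields (VX X)"

definition is_solution :: "(real \<Rightarrow> 'a::euclidean_space \<Rightarrow> 'a) \<Rightarrow> real set \<Rightarrow> (real \<Rightarrow> 'a) \<Rightarrow> bool" where
  "is_solution X I x \<longleftrightarrow> open I \<and> is_interval I \<and> I \<noteq> {} \<and>
     (\<forall>t\<in>I. (x has_vector_derivative X t (x t)) (at t))"

text \<open>Local diffeomorphism R^n -> R^n: smooth with invertible differential at every point
 (equivalently, by the inverse function theorem, locally a diffeomorphism).\<close>
definition local_diffeo :: "('a::euclidean_space \<Rightarrow> 'a) \<Rightarrow> bool" where
  "local_diffeo f \<longleftrightarrow> smooth f \<and>
     (\<forall>k. \<exists>f'. (f has_derivative f') (at k) \<and> bij f')"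

text \<open>The product space R^{n_1} x ... x R^{n_m} is real^'N, whose coordinate index
 type 'N is partitioned by blk :: 'N => nat into the blocks 0..m-1 (block a = the
 coordinates of R^{n_(a+1)}). A vector field on the factor of block a is encoded as
 (lifted to) a vector field on real^'N whose components vanish outside block a and
 which depends only on the coordinates in block a.\<close>
definition block_tdep_field :: "('n \<Rightarrow> nat) \<Rightarrow> nat \<Rightarrow> (real \<Rightarrow> real^'n \<Rightarrow> real^'n) \<Rightarrow> bool" where
  "block_tdep_field blk a Y \<longleftrightarrow>
     (\<forall>t x i. blk i \<noteq> a \<longrightarrow> Y t x $ i = 0) \<and>
     (\<forall>t x y. (\<forall>j. blk j = a \<longrightarrow> x $ j = y $ j) \<longrightarrow> Y t x = Y t y)"

definition direct_product :: "nat \<Rightarrow> (nat \<Rightarrow> real \<Rightarrow> real^'n::finite \<Rightarrow> real^'n) \<Rightarrow> real \<Rightarrow> real^'n \<Rightarrow> real^'n" where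
  "direct_product m Xs = (\<lambda>t x. \<Sum>a<m. Xs a t x)"

text \<open>Mixed superposition rule (Phi, X_(1),...,X_(m)) for X, with the factors X_(a)
 block-encoded on real^'N and Phi : (R^{n_1} x ... x R^{n_m}) x R^{n_0} -> R^{n_0}
 written as Phi p k.  There is a generic (open dense) set U of points of the product
 space such that k |-> Phi p k is a local diffeomorphism for p in U, and for every
 family of particular solutions of the X_(a) (i.e. a solution of their direct product)
 staying in U and every k, t |-> Phi (xhat t) k is a particular solution of X.\<close>
definition mixed_superposition_rule ::
  "(real \<Rightarrow> real^'n::finite \<Rightarrow> real^'n) \<Rightarrow> (real^'N::finite \<Rightarrow> real^'n \<Rightarrow> real^'n) \<Rightarrow>
   ('N \<Rightarrow> nat) \<Rightarrow> nat \<Rightarrow> (nat \<Rightarrow> real \<Rightarrow> real^'N \<Rightarrow> real^'N) \<Rightarrow> bool" where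
  "mixed_superposition_rule X Phi blk m Xs \<longleftrightarrow>
     tdep_vector_field X \<and>
     (\<forall>i. blk i < m) \<and>
     (\<forall>a<m. tdep_vector_field (Xs a) \<and> block_tdep_field blk a (Xs a)) \<and>
     smooth (\<lambda>(p, k). Phi p k) \<and>
     (\<exists>U. open U \<and> closure U = UNIV \<and>
        (\<forall>p\<in>U. local_diffeo (Phi p)) \<and>
        (\<forall>I xhat k. is_solution (direct_product m Xs) I xhat \<and> xhat ` I \<subseteq> U \<longrightarrow>
            is_solution X I (\<lambda>t. Phi (xhat t) k)))"

definition related_fields :: "('a::euclidean_space \<Rightarrow> 'b::euclidean_space) \<Rightarrow> ('a \<Rightarrow> 'a) \<Rightarrow> ('b \<Rightarrow> 'b) \<Rightarrow> bool" where
  "related_fields F Z Y \<longleftrightarrow> (\<forall>p. frechet_derivative F (at p) (Z p) = Y (F p))"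

definition projectable :: "('a::euclidean_space \<Rightarrow> 'b::euclidean_space) \<Rightarrow> ('a \<Rightarrow> 'a) \<Rightarrow> bool" where
  "projectable F Z \<longleftrightarrow> (\<exists>Y. vector_field Y \<and> related_fields F Z Y)"

definition lie_epimorphism :: "(('a::euclidean_space \<Rightarrow> 'a) \<Rightarrow> ('b::euclidean_space \<Rightarrow> 'b)) \<Rightarrow>
    ('a \<Rightarrow> 'a) set \<Rightarrow> ('b \<Rightarrow> 'b) set \<Rightarrow> bool" where
  "lie_epimorphism T L1 L2 \<longleftrightarrow>
     (\<forall>Y\<in>L1. \<forall>Z\<in>L1. \<forall>a b. T (\<lambda>x. a *\<^sub>R Y x + b *\<^sub>R Z x) = (\<lambda>x. a *\<^sub>R T Y x + b *\<^sub>R T Z x)) \<and>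
     (\<forall>Y\<in>L1. \<forall>Z\<in>L1. T (lie_bracket Y Z) = lie_bracket (T Y) (T Z)) \<and>
     T ` L1 = L2"

end

theory Submission
  imports Defs
begin



lemma fd_works: "f differentiable (at x) \<Longrightarrow> (f has_derivative frechet_derivative f (at x)) (at x)"
  using frechet_derivative_works by blast

lemma smooth_upto_mono: "smooth_upto k f \<Longrightarrow> j \<le> k \<Longrightarrow> smooth_upto j f"
proof (induction k arbitrary: f j)
  case 0 then show ?case by simp
next
  case (Suc k) then show ?case by (cases j) auto
qed

lemma smooth_upto_SucD: "smooth_upto (Suc k) f \<Longrightarrow> smooth_upto k f"
  using smooth_upto_mono by (metis le_SucI order_refl)

lemma smooth_upto_const: "smooth_upto k (\<lambda>x. c)"
proof (induction k arbitrary: c)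
  case (Suc k) then show ?case by simp
qed simp

lemma smooth_upto_add:
  "smooth_upto k f \<Longrightarrow> smooth_upto k g \<Longrightarrow> smooth_upto k (\<lambda>x. f x + g x)"
proof (induction k arbitrary: f g)
  case (Suc k)
  have df: "\<And>x. f differentiable (at x)" and dg: "\<And>x. g differentiable (at x)" using Suc by auto
  have e: "\<And>v. (\<lambda>x. frechet_derivative (\<lambda>x. f x + g x) (at x) v) =
      (\<lambda>x. frechet_derivative f (at x) v + frechet_derivative g (at x) v)"
  proof
    fix v x
    have "((\<lambda>x. f x + g x) has_derivative (\<lambda>v. frechet_derivative f (at x) v + frechet_derivative g (at x) v)) (at x)"
      by (intro has_derivative_add fd_works df dg)
    from frechet_derivative_at[OF this] show "frechet_derivative (\<lambda>x. f x + g x) (at x) v = frechet_derivative f (at x) v + frechet_derivative g (at x) v"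
      by metis
  qed
  show ?case using Suc df dg by (auto simp: e intro!: Suc.IH)
qed simp

lemma smooth_upto_scaleR:
  fixes f :: "'a::euclidean_space \<Rightarrow> real" and g :: "'a \<Rightarrow> 'b::euclidean_space"
  shows "smooth_upto k f \<Longrightarrow> smooth_upto k g \<Longrightarrow> smooth_upto k (\<lambda>x. f x *\<^sub>R g x)"
proof (induction k arbitrary: f g)
  case (Suc k)
  have df: "\<And>x. f differentiable (at x)" and dg: "\<And>x. g differentiable (at x)" using Suc by auto
  have e: "\<And>v. (\<lambda>x. frechet_derivative (\<lambda>x. f x *\<^sub>R g x) (at x) v) =
      (\<lambda>x. f x *\<^sub>R frechet_derivative g (at x) v + frechet_derivative f (at x) v *\<^sub>R g x)"
  proof
    fix v x
    have "((\<lambda>x. f x *\<^sub>R g x) has_derivative (\<lambda>v. f x *\<^sub>R frechet_derivative g (at x) v + frechet_derivative f (at x) v *\<^sub>R g x)) (at x)"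
      by (intro has_derivative_scaleR fd_works df dg)
    from frechet_derivative_at[OF this] show "frechet_derivative (\<lambda>x. f x *\<^sub>R g x) (at x) v = f x *\<^sub>R frechet_derivative g (at x) v + frechet_derivative f (at x) v *\<^sub>R g x"
      by metis
  qed
  have sf: "smooth_upto k f" and sg: "smooth_upto k g" using Suc.prems smooth_upto_SucD by blast+
  show ?case using Suc df dg sf sg
    by (auto simp: e intro!: smooth_upto_add Suc.IH differentiable_scaleR)
qed simp

lemma smooth_upto_linear:
  assumes L: "bounded_linear L"
  shows "smooth_upto k f \<Longrightarrow> smooth_upto k (\<lambda>x. L (f x))"
proof (induction k arbitrary: f)
  case (Suc k)
  have df: "\<And>x. f differentiable (at x)" using Suc by auto
  have e: "\<And>v. (\<lambda>x. frechet_derivative (\<lambda>x. L (f x)) (at x) v) =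
      (\<lambda>x. L (frechet_derivative f (at x) v))"
  proof
    fix v x
    have "((\<lambda>x. L (f x)) has_derivative (\<lambda>v. L (frechet_derivative f (at x) v))) (at x)"
      using bounded_linear.has_derivative[OF L fd_works[OF df]] .
    from frechet_derivative_at[OF this] show "frechet_derivative (\<lambda>x. L (f x)) (at x) v = L (frechet_derivative f (at x) v)"
      by metis
  qed
  have "\<And>x. (\<lambda>x. L (f x)) differentiable (at x)"
    using bounded_linear.has_derivative[OF L fd_works[OF df]] differentiableI by blast
  then show ?case using Suc by (auto simp: e)
qed simp

lemma smooth_upto_affine:
  assumes L: "bounded_linear L"
  shows "smooth_upto k f \<Longrightarrow> smooth_upto k (\<lambda>x. f (c + L x))"
proof (induction k arbitrary: f)
  case (Suc k)
  have df: "\<And>x. f differentiable (at x)" using Suc by auto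
  have hd: "\<And>x. ((\<lambda>x. f (c + L x)) has_derivative (\<lambda>v. frechet_derivative f (at (c + L x)) (L v))) (at x)"
  proof -
    fix x
    have "((\<lambda>x. c + L x) has_derivative L) (at x)"
      using has_derivative_add[OF has_derivative_const[of c] bounded_linear.has_derivative[OF L has_derivative_ident]] by simp
    from has_derivative_compose[OF this fd_works[OF df]]
    show "((\<lambda>x. f (c + L x)) has_derivative (\<lambda>v. frechet_derivative f (at (c + L x)) (L v))) (at x)" by simp
  qed
  have e: "\<And>v. (\<lambda>x. frechet_derivative (\<lambda>x. f (c + L x)) (at x) v) =
      (\<lambda>x. frechet_derivative f (at (c + L x)) (L v))"
    using frechet_derivative_at[OF hd] by metis
  have d: "\<forall>x. (\<lambda>x. f (c + L x)) differentiable at x" using hd by (blast intro: differentiableI)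
  have "smooth_upto k (\<lambda>x. frechet_derivative f (at (c + L x)) (L v))" for v
    using Suc.IH[of "\<lambda>y. frechet_derivative f (at y) (L v)"] Suc.prems by simp
  then show ?case using d by (simp add: e)
qed simp

lemma smooth_upto_sum:
  "finite S \<Longrightarrow> (\<And>i. i \<in> S \<Longrightarrow> smooth_upto k (f i)) \<Longrightarrow> smooth_upto k (\<lambda>x. \<Sum>i\<in>S. f i x)"
proof (induction S rule: finite_induct)
  case empty then show ?case using smooth_upto_const[of k 0] by simp
next
  case (insert a S) then show ?case by (simp add: smooth_upto_add)
qed

lemma smooth_upto_id: "smooth_upto k (\<lambda>x. x)"
  by (cases k) (auto simp: smooth_upto_const)




lemma smooth_add: "smooth f \<Longrightarrow> smooth g \<Longrightarrow> smooth (\<lambda>x. f x + g x)"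
  by (simp add: smooth_def smooth_upto_add)
lemma smooth_scaleR: "smooth f \<Longrightarrow> smooth g \<Longrightarrow> smooth (\<lambda>x. f x *\<^sub>R g x)"
  by (simp add: smooth_def smooth_upto_scaleR)
lemma smooth_const: "smooth (\<lambda>x. c)"
  by (simp add: smooth_def smooth_upto_const)
lemma smooth_cscale: "smooth g \<Longrightarrow> smooth (\<lambda>x. c *\<^sub>R g x)"
  using smooth_scaleR[OF smooth_const] by blast
lemma smooth_diff: "smooth f \<Longrightarrow> smooth g \<Longrightarrow> smooth (\<lambda>x. f x - g x)"
proof -
  assume a: "smooth f" "smooth g"
  have "smooth (\<lambda>x. f x + (-1) *\<^sub>R g x)" by (intro smooth_add smooth_cscale a)
  then show ?thesis by simp
qed
lemma smooth_linear: "bounded_linear L \<Longrightarrow> smooth f \<Longrightarrow> smooth (\<lambda>x. L (f x))"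
  by (simp add: smooth_def smooth_upto_linear)
lemma smooth_affine: "bounded_linear L \<Longrightarrow> smooth f \<Longrightarrow> smooth (\<lambda>x. f (c + L x))"
  by (simp add: smooth_def smooth_upto_affine)
lemma smooth_sum: "finite S \<Longrightarrow> (\<And>i. i \<in> S \<Longrightarrow> smooth (f i)) \<Longrightarrow> smooth (\<lambda>x. \<Sum>i\<in>S. f i x)"
  by (simp add: smooth_def smooth_upto_sum)
lemma smooth_inner: "smooth f \<Longrightarrow> smooth (\<lambda>x. f x \<bullet> c)"
  using smooth_linear[OF bounded_linear_inner_left] by blast
lemma smooth_deriv: "smooth f \<Longrightarrow> smooth (\<lambda>x. frechet_derivative f (at x) v)"
  unfolding smooth_def by (metis smooth_upto.simps(2))
lemma smooth_differentiable: "smooth f \<Longrightarrow> f differentiable (at x)"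
  unfolding smooth_def by (metis smooth_upto.simps(2))
lemma smooth_hasderiv: "smooth f \<Longrightarrow> (f has_derivative frechet_derivative f (at x)) (at x)"
  using smooth_differentiable fd_works by blast
lemma smooth_continuous: "smooth f \<Longrightarrow> continuous_on UNIV f"
  using smooth_differentiable differentiable_imp_continuous_on differentiable_on_def
  by (metis differentiable_at_withinI)
lemma smooth_isCont: "smooth f \<Longrightarrow> isCont f x"
  using smooth_differentiable differentiable_imp_continuous_within by blast
lemma smooth_linear_deriv: "smooth f \<Longrightarrow> linear (frechet_derivative f (at x))"
  using smooth_hasderiv has_derivative_linear by blast

lemma linear_basis_expand:
  assumes "linear L"
  shows "L v = (\<Sum>i\<in>Basis. (v \<bullet> i) *\<^sub>R L i)"
proof -
  have "L v = L (\<Sum>i\<in>Basis. (v \<bullet> i) *\<^sub>R i)" by (simp add: euclidean_representation)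
  also have "\<dots> = (\<Sum>i\<in>Basis. (v \<bullet> i) *\<^sub>R L i)"
    using assms by (simp add: linear_sum linear_scale)
  finally show ?thesis .
qed

lemma smooth_apply_deriv:
  assumes "smooth Y" "smooth Z"
  shows "smooth (\<lambda>x. frechet_derivative Z (at x) (Y x))"
proof -
  have "(\<lambda>x. frechet_derivative Z (at x) (Y x)) = (\<lambda>x. \<Sum>i\<in>Basis. (Y x \<bullet> i) *\<^sub>R frechet_derivative Z (at x) i)"
    using linear_basis_expand[OF smooth_linear_deriv[OF assms(2)]] by blast
  moreover have "smooth (\<lambda>x. \<Sum>i\<in>Basis. (Y x \<bullet> i) *\<^sub>R frechet_derivative Z (at x) i)"
    by (intro smooth_sum smooth_scaleR smooth_inner smooth_deriv assms finite_Basis)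
  ultimately show ?thesis by simp
qed

lemma smooth_bracket: "smooth Y \<Longrightarrow> smooth Z \<Longrightarrow> smooth (lie_bracket Y Z)"
  unfolding lie_bracket_def by (intro smooth_diff smooth_apply_deriv)

lemma smooth_lie_gen: "Z \<in> lie_gen S \<Longrightarrow> (\<And>Y. Y \<in> S \<Longrightarrow> smooth Y) \<Longrightarrow> smooth Z"
proof (induction Z rule: lie_gen.induct)
qed (auto intro: smooth_const smooth_add smooth_cscale smooth_bracket)

lemma tdep_smooth:
  assumes "tdep_vector_field X" shows "smooth (X t)"
proof -
  have s: "smooth (\<lambda>(t, x). X t x)" using assms tdep_vector_field_def by blast
  have bl: "bounded_linear (\<lambda>x::'a. (0::real, x))"
    by (simp add: bounded_linear_Pair)
  have "smooth (\<lambda>x. (\<lambda>(t, x). X t x) ((t, 0) + (0::real, x)))"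
    by (rule smooth_affine[OF bl s])
  then show ?thesis by (simp add: fun_eq_iff)
qed

lemma tdep_cont:
  assumes "tdep_vector_field X" shows "continuous_on UNIV (\<lambda>(t, x). X t x)"
  using assms smooth_continuous tdep_vector_field_def by blast




lemma line_deriv:
  assumes "smooth G"
  shows "DERIV (\<lambda>s. G (a + s *\<^sub>R v) \<bullet> e) s :> (frechet_derivative G (at (a + s *\<^sub>R v)) v \<bullet> e)"
proof -
  have l: "linear (frechet_derivative G (at (a + s *\<^sub>R v)))" using smooth_linear_deriv[OF assms] .
  have h1: "((\<lambda>s. a + s *\<^sub>R v) has_derivative (\<lambda>d. d *\<^sub>R v)) (at s)"
    by (auto intro!: derivative_eq_intros)
  have h2: "((\<lambda>s. G (a + s *\<^sub>R v)) has_derivative (\<lambda>d. frechet_derivative G (at (a + s *\<^sub>R v)) (d *\<^sub>R v))) (at s)"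
    using has_derivative_compose[OF h1 smooth_hasderiv[OF assms]] by simp
  have h3: "((\<lambda>s. G (a + s *\<^sub>R v) \<bullet> e) has_derivative (\<lambda>d. frechet_derivative G (at (a + s *\<^sub>R v)) (d *\<^sub>R v) \<bullet> e)) (at s)"
    using bounded_linear.has_derivative[OF bounded_linear_inner_left h2] .
  show ?thesis
    apply (rule has_derivative_imp_has_field_derivative[OF h3])
    using l by (simp add: linear_scale)
qed

definition "DD F q u w = frechet_derivative (\<lambda>q. frechet_derivative F (at q) w) (at q) u"

lemma second_diff_mvt:
  fixes F :: "'a::euclidean_space \<Rightarrow> 'b::euclidean_space"
  assumes F: "smooth F" and h: "h > 0"
  shows "\<exists>q. norm (q - p) \<le> h * (norm u + norm w) \<and>
    (F (p + h *\<^sub>R u + h *\<^sub>R w) - F (p + h *\<^sub>R u) - F (p + h *\<^sub>R w) + F p) \<bullet> e = h * h * (DD F q w u \<bullet> e)"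
proof -
  define phi where "phi s = F ((p + h *\<^sub>R w) + s *\<^sub>R u) \<bullet> e - F (p + s *\<^sub>R u) \<bullet> e" for s
  have dphi: "DERIV phi s :> (frechet_derivative F (at ((p + h *\<^sub>R w) + s *\<^sub>R u)) u \<bullet> e - frechet_derivative F (at (p + s *\<^sub>R u)) u \<bullet> e)" for s
    unfolding phi_def by (intro DERIV_diff line_deriv F)
  obtain xi where xi: "0 < xi" "xi < h" and eq1: "phi h - phi 0 = (h - 0) * (frechet_derivative F (at ((p + h *\<^sub>R w) + xi *\<^sub>R u)) u \<bullet> e - frechet_derivative F (at (p + xi *\<^sub>R u)) u \<bullet> e)"
    using MVT2[OF h dphi] by blast
  define chi where "chi t = frechet_derivative F (at ((p + xi *\<^sub>R u) + t *\<^sub>R w)) u \<bullet> e" for t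
  have dchi: "DERIV chi t :> (DD F ((p + xi *\<^sub>R u) + t *\<^sub>R w) w u \<bullet> e)" for t
    unfolding chi_def DD_def by (intro line_deriv smooth_deriv F)
  obtain eta where eta: "0 < eta" "eta < h" and eq2: "chi h - chi 0 = (h - 0) * (DD F ((p + xi *\<^sub>R u) + eta *\<^sub>R w) w u \<bullet> e)"
    using MVT2[OF h dchi] by blast
  define q where "q = (p + xi *\<^sub>R u) + eta *\<^sub>R w"
  have "norm (q - p) \<le> norm (xi *\<^sub>R u) + norm (eta *\<^sub>R w)"
    unfolding q_def by (metis add_diff_cancel_left' add.assoc norm_triangle_ineq)
  also have "\<dots> \<le> h * norm u + h * norm w"
    using xi eta by (intro add_mono) (auto intro: mult_right_mono)
  finally have nq: "norm (q - p) \<le> h * (norm u + norm w)" by (simp add: algebra_simps)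
  have "(F (p + h *\<^sub>R u + h *\<^sub>R w) - F (p + h *\<^sub>R u) - F (p + h *\<^sub>R w) + F p) \<bullet> e = phi h - phi 0"
    unfolding phi_def by (simp add: algebra_simps inner_diff_left inner_add_left)
  also have "\<dots> = h * (chi h - chi 0)"
    unfolding eq1 chi_def by (simp add: algebra_simps)
  also have "\<dots> = h * h * (DD F q w u \<bullet> e)"
    unfolding eq2 q_def by simp
  finally show ?thesis using nq by blast
qed

lemma DD_sym:
  fixes F :: "'a::euclidean_space \<Rightarrow> 'b::euclidean_space"
  assumes F: "smooth F"
  shows "DD F p u w = DD F p w u"
proof (rule euclidean_eqI)
  fix e :: 'b assume "e \<in> Basis"
  define g1 where "g1 q = DD F q w u \<bullet> e" for q
  define g2 where "g2 q = DD F q u w \<bullet> e" for q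
  have c1: "isCont g1 p" unfolding g1_def DD_def
    by (intro continuous_intros smooth_isCont smooth_deriv F)
  have c2: "isCont g2 p" unfolding g2_def DD_def
    by (intro continuous_intros smooth_isCont smooth_deriv F)
  show "DD F p u w \<bullet> e = DD F p w u \<bullet> e"
  proof (rule ccontr)
    assume ne: "DD F p u w \<bullet> e \<noteq> DD F p w u \<bullet> e"
    define eps where "eps = \<bar>g1 p - g2 p\<bar> / 2"
    have eps: "eps > 0" using ne unfolding eps_def g1_def g2_def by auto
    obtain d1 where d1: "d1 > 0" "\<And>q. dist q p < d1 \<Longrightarrow> dist (g1 q) (g1 p) < eps"
      using c1 eps unfolding continuous_at_eps_delta by blast
    obtain d2 where d2: "d2 > 0" "\<And>q. dist q p < d2 \<Longrightarrow> dist (g2 q) (g2 p) < eps"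
      using c2 eps unfolding continuous_at_eps_delta by blast
    define h where "h = min d1 d2 / (2 * (norm u + norm w + 1))"
    have pos2: "2 * (norm u + norm w + 1) > 0" by (smt (verit) norm_ge_zero)
    then have hpos: "h > 0" unfolding h_def using d1 d2 by (intro divide_pos_pos) auto
    have hb: "h * (norm u + norm w) < min d1 d2"
    proof -
      have "h * (norm u + norm w) \<le> h * (norm u + norm w + 1) " using hpos by simp
      also have "\<dots> = min d1 d2 / 2" unfolding h_def
        using pos2 by (simp add: field_simps)
      also have "\<dots> < min d1 d2" using d1(1) d2(1) by linarith
      finally show ?thesis .
    qed
    obtain q1 where q1: "norm (q1 - p) \<le> h * (norm u + norm w)"
      "(F (p + h *\<^sub>R u + h *\<^sub>R w) - F (p + h *\<^sub>R u) - F (p + h *\<^sub>R w) + F p) \<bullet> e = h * h * g1 q1"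
      using second_diff_mvt[OF F hpos, of p u w e] unfolding g1_def by blast
    obtain q2 where q2: "norm (q2 - p) \<le> h * (norm w + norm u)"
      "(F (p + h *\<^sub>R w + h *\<^sub>R u) - F (p + h *\<^sub>R w) - F (p + h *\<^sub>R u) + F p) \<bullet> e = h * h * g2 q2"
      using second_diff_mvt[OF F hpos, of p w u e] unfolding g2_def by blast
    have "h * h * g1 q1 = h * h * g2 q2"
      using q1(2) q2(2) by (simp add: algebra_simps)
    then have geq: "g1 q1 = g2 q2" using hpos by simp
    have "dist q1 p < d1" "dist q2 p < d2" using q1(1) q2(1) hb by (auto simp: dist_norm add.commute)
    then have "dist (g1 q1) (g1 p) < eps" "dist (g2 q2) (g2 p) < eps" using d1 d2 by auto
    then have "\<bar>g1 p - g2 p\<bar> < 2 * eps" using geq by (simp add: dist_real_def)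
    then show False unfolding eps_def by simp
  qed
qed




lemma has_deriv_DF_apply:
  fixes F :: "'a::euclidean_space \<Rightarrow> 'b::euclidean_space"
  assumes F: "smooth F" and Z: "smooth Z"
  shows "((\<lambda>q. frechet_derivative F (at q) (Z q)) has_derivative
     (\<lambda>d. \<Sum>i\<in>Basis. (Z p \<bullet> i) *\<^sub>R DD F p d i + (frechet_derivative Z (at p) d \<bullet> i) *\<^sub>R frechet_derivative F (at p) i)) (at p)"
proof -
  have e: "(\<lambda>q. frechet_derivative F (at q) (Z q)) = (\<lambda>q. \<Sum>i\<in>Basis. (Z q \<bullet> i) *\<^sub>R frechet_derivative F (at q) i)"
    using linear_basis_expand[OF smooth_linear_deriv[OF F]] by blast
  have "((\<lambda>q. \<Sum>i\<in>Basis. (Z q \<bullet> i) *\<^sub>R frechet_derivative F (at q) i) has_derivative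
     (\<lambda>d. \<Sum>i\<in>Basis. (Z p \<bullet> i) *\<^sub>R DD F p d i + (frechet_derivative Z (at p) d \<bullet> i) *\<^sub>R frechet_derivative F (at p) i)) (at p)"
    unfolding DD_def
    apply (rule has_derivative_sum)
    apply (rule has_derivative_scaleR)
     apply (rule bounded_linear.has_derivative[OF bounded_linear_inner_left smooth_hasderiv[OF Z]])
    apply (rule smooth_hasderiv[OF smooth_deriv[OF F]])
    done
  then show ?thesis unfolding e .
qed

lemma DD_lin:
  fixes F :: "'a::euclidean_space \<Rightarrow> 'b::euclidean_space"
  assumes F: "smooth F"
  shows "DD F p d w = (\<Sum>i\<in>Basis. (w \<bullet> i) *\<^sub>R DD F p d i)"
proof -
  have "((\<lambda>q. frechet_derivative F (at q) w) has_derivative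
     (\<lambda>d. \<Sum>i\<in>Basis. (w \<bullet> i) *\<^sub>R DD F p d i + (frechet_derivative (\<lambda>x. w) (at p) d \<bullet> i) *\<^sub>R frechet_derivative F (at p) i)) (at p)"
    using has_deriv_DF_apply[OF F smooth_const] .
  then have "((\<lambda>q. frechet_derivative F (at q) w) has_derivative
     (\<lambda>d. \<Sum>i\<in>Basis. (w \<bullet> i) *\<^sub>R DD F p d i)) (at p)" by simp
  from frechet_derivative_at[OF this]
  have eq: "(\<lambda>d. \<Sum>i\<in>Basis. (w \<bullet> i) *\<^sub>R DD F p d i) = frechet_derivative (\<lambda>q. frechet_derivative F (at q) w) (at p)" .
  have "DD F p d w = frechet_derivative (\<lambda>q. frechet_derivative F (at q) w) (at p) d" by (simp only: DD_def)
  also have "\<dots> = (\<Sum>i\<in>Basis. (w \<bullet> i) *\<^sub>R DD F p d i)" by (simp only: eq[symmetric])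
  finally show ?thesis .
qed

lemma key_identity:
  fixes F :: "'a::euclidean_space \<Rightarrow> 'b::euclidean_space"
  assumes F: "smooth F" and Z: "smooth Z" and Y: "smooth Y" and rel: "related_fields F Z Y"
  shows "frechet_derivative F (at p) (frechet_derivative Z (at p) d) + DD F p d (Z p)
       = frechet_derivative Y (at (F p)) (frechet_derivative F (at p) d)"
proof -
  have lF: "linear (frechet_derivative F (at p))" using smooth_linear_deriv[OF F] .
  have hG: "((\<lambda>q. frechet_derivative F (at q) (Z q)) has_derivative
     (\<lambda>d. frechet_derivative F (at p) (frechet_derivative Z (at p) d) + DD F p d (Z p))) (at p)"
  proof (rule has_derivative_eq_rhs[OF has_deriv_DF_apply[OF F Z]])
    show "(\<lambda>d. \<Sum>i\<in>Basis. (Z p \<bullet> i) *\<^sub>R DD F p d i + (frechet_derivative Z (at p) d \<bullet> i) *\<^sub>R frechet_derivative F (at p) i)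
      = (\<lambda>d. frechet_derivative F (at p) (frechet_derivative Z (at p) d) + DD F p d (Z p))"
    proof
      fix d
      have a: "(\<Sum>i\<in>Basis. (Z p \<bullet> i) *\<^sub>R DD F p d i) = DD F p d (Z p)"
        by (rule DD_lin[OF F, symmetric])
      have b: "(\<Sum>i\<in>Basis. (frechet_derivative Z (at p) d \<bullet> i) *\<^sub>R frechet_derivative F (at p) i)
         = frechet_derivative F (at p) (frechet_derivative Z (at p) d)"
        by (rule linear_basis_expand[OF lF, symmetric])
      show "(\<Sum>i\<in>Basis. (Z p \<bullet> i) *\<^sub>R DD F p d i + (frechet_derivative Z (at p) d \<bullet> i) *\<^sub>R frechet_derivative F (at p) i)
        = frechet_derivative F (at p) (frechet_derivative Z (at p) d) + DD F p d (Z p)"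
        by (simp only: sum.distrib a b add.commute)
    qed
  qed
  have hH: "((\<lambda>q. Y (F q)) has_derivative (\<lambda>d. frechet_derivative Y (at (F p)) (frechet_derivative F (at p) d))) (at p)"
    using has_derivative_compose[OF smooth_hasderiv[OF F] smooth_hasderiv[OF Y]] by simp
  have eq: "(\<lambda>q. frechet_derivative F (at q) (Z q)) = (\<lambda>q. Y (F q))"
    using rel unfolding related_fields_def by blast
  have "(\<lambda>d. frechet_derivative F (at p) (frechet_derivative Z (at p) d) + DD F p d (Z p))
     = (\<lambda>d. frechet_derivative Y (at (F p)) (frechet_derivative F (at p) d))"
  proof (rule has_derivative_unique[OF hG])
    show "((\<lambda>q. frechet_derivative F (at q) (Z q)) has_derivative (\<lambda>d. frechet_derivative Y (at (F p)) (frechet_derivative F (at p) d))) (at p)"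
      unfolding eq by (rule hH)
  qed
  then show ?thesis by (rule fun_cong)
qed

lemma related_bracket:
  fixes F :: "'a::euclidean_space \<Rightarrow> 'b::euclidean_space"
  assumes F: "smooth F" and Z1: "smooth Z1" and Y1: "smooth Y1" and r1: "related_fields F Z1 Y1"
    and Z2: "smooth Z2" and Y2: "smooth Y2" and r2: "related_fields F Z2 Y2"
  shows "related_fields F (lie_bracket Z1 Z2) (lie_bracket Y1 Y2)"
  unfolding related_fields_def
proof
  fix p
  have lF: "linear (frechet_derivative F (at p))" using smooth_linear_deriv[OF F] .
  have k1: "frechet_derivative F (at p) (frechet_derivative Z2 (at p) (Z1 p)) + DD F p (Z1 p) (Z2 p)
       = frechet_derivative Y2 (at (F p)) (Y1 (F p))"
    using key_identity[OF F Z2 Y2 r2, of p "Z1 p"] r1[unfolded related_fields_def, rule_format, of p] by simp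
  have k2: "frechet_derivative F (at p) (frechet_derivative Z1 (at p) (Z2 p)) + DD F p (Z2 p) (Z1 p)
       = frechet_derivative Y1 (at (F p)) (Y2 (F p))"
    using key_identity[OF F Z1 Y1 r1, of p "Z2 p"] r2[unfolded related_fields_def, rule_format, of p] by simp
  have s: "DD F p (Z1 p) (Z2 p) = DD F p (Z2 p) (Z1 p)" using DD_sym[OF F] .
  show "frechet_derivative F (at p) (lie_bracket Z1 Z2 p) = lie_bracket Y1 Y2 (F p)"
  proof -
    have "frechet_derivative F (at p) (lie_bracket Z1 Z2 p) = frechet_derivative F (at p) (frechet_derivative Z2 (at p) (Z1 p)) - frechet_derivative F (at p) (frechet_derivative Z1 (at p) (Z2 p))"
      unfolding lie_bracket_def by (rule linear_diff[OF lF])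
    also have "\<dots> = lie_bracket Y1 Y2 (F p)"
      unfolding lie_bracket_def k1[symmetric] k2[symmetric] s by simp
    finally show ?thesis .
  qed
qed




lemma picard:
  fixes G :: "real \<Rightarrow> 'a::euclidean_space \<Rightarrow> 'a"
  assumes cont: "continuous_on UNIV (\<lambda>(t, x). G t x)"
    and r: "r > 0" and M: "M > 0" and L: "L > 0"
    and bnd: "\<And>s y. s \<in> {t0..t0+1} \<Longrightarrow> y \<in> cball p r \<Longrightarrow> norm (G s y) \<le> M"
    and lip: "\<And>s y z. s \<in> {t0..t0+1} \<Longrightarrow> y \<in> cball p r \<Longrightarrow> z \<in> cball p r \<Longrightarrow> norm (G s y - G s z) \<le> L * norm (y - z)"
  shows "\<exists>h>0. \<exists>x. continuous_on UNIV x \<and> x t0 = p \<and> (\<forall>t\<in>{t0..t0+h}. x t \<in> cball p r) \<and>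
           (\<forall>t\<in>{t0<..<t0+h}. (x has_vector_derivative G t (x t)) (at t))"
proof -
  define h where "h = min 1 (min (r / M) (1 / (2 * L)))"
  have hpos: "h > 0" unfolding h_def using r M L by simp
  have h1: "h \<le> 1" unfolding h_def by simp
  have hM: "h * M \<le> r"
  proof -
    have "h \<le> r / M" unfolding h_def by simp
    then show ?thesis using M by (simp add: field_simps)
  qed
  have hL: "h * L \<le> 1 / 2"
  proof -
    have "h \<le> 1 / (2 * L)" unfolding h_def by simp
    then show ?thesis using L by (simp add: field_simps)
  qed
  define clamp where "clamp t = max t0 (min (t0 + h) t)" for t
  have clamp_in: "clamp t \<in> {t0..t0+h}" for t unfolding clamp_def using hpos by auto
  have clamp_id: "t \<in> {t0..t0+h} \<Longrightarrow> clamp t = t" for t unfolding clamp_def by auto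
  have clamp_cont: "continuous_on UNIV clamp" unfolding clamp_def by (intro continuous_intros)
  define proj where "proj = closest_point (cball p r)"
  have proj_in: "proj y \<in> cball p r" for y unfolding proj_def using r by (intro closest_point_in_set) auto
  have proj_lip: "dist (proj y) (proj z) \<le> dist y z" for y z unfolding proj_def using r
    by (intro closest_point_lipschitz) auto
  have proj_cont: "continuous_on UNIV proj" unfolding proj_def using r
    by (intro continuous_on_closest_point) auto
  have proj_self: "y \<in> cball p r \<Longrightarrow> proj y = y" for y unfolding proj_def by (rule closest_point_self)
  define fg where "fg g s = G s (proj (g s))" for g :: "real \<Rightarrow> 'a" and s
  have fg_cont: "continuous_on S (fg g)" if "continuous_on UNIV g" for g S
  proof -
    have c1: "continuous_on UNIV (\<lambda>s. (s, proj (g s)))"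
      by (intro continuous_intros continuous_on_compose2[OF proj_cont that]) auto
    have "continuous_on UNIV (\<lambda>s. (\<lambda>(t, x). G t x) (s, proj (g s)))"
      by (rule continuous_on_compose2[OF cont c1]) auto
    then have "continuous_on UNIV (fg g)" unfolding fg_def by simp
    then show ?thesis by (rule continuous_on_subset) simp
  qed
  have fg_bnd: "s \<in> {t0..t0+h} \<Longrightarrow> norm (fg g s) \<le> M" for g s
    unfolding fg_def using h1 by (intro bnd proj_in) auto
  define Q where "Q g t = p + integral {t0..clamp t} (fg g)" for g t
  have Q_bnd: "norm (Q g t - p) \<le> M * h" if "continuous_on UNIV g" for g t
  proof -
    have "norm (integral {t0..clamp t} (fg g)) \<le> M * (clamp t - t0)"
      using clamp_in[of t] by (intro integral_bound fg_cont that fg_bnd) auto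
    also have "\<dots> \<le> M * h" using clamp_in[of t] M by (intro mult_left_mono) auto
    finally show ?thesis unfolding Q_def by simp
  qed
  have Q_cont: "continuous_on UNIV (Q g)" if "continuous_on UNIV g" for g
  proof -
    have "continuous_on {t0..t0+h} (\<lambda>u. integral {t0..u} (fg g))"
      by (intro indefinite_integral_continuous_1 integrable_continuous_interval fg_cont that)
    then have "continuous_on UNIV (\<lambda>t. integral {t0..clamp t} (fg g))"
      by (rule continuous_on_compose2[OF _ clamp_cont]) (use clamp_in in auto)
    then show ?thesis unfolding Q_def by (intro continuous_intros)
  qed
  have Q_bc: "Q g \<in> bcontfun" if "continuous_on UNIV g" for g
  proof (rule bcontfun_normI[OF Q_cont[OF that]])
    fix t
    have "norm (Q g t) \<le> norm p + norm (Q g t - p)" using norm_triangle_ineq[of p "Q g t - p"] by simp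
    also have "\<dots> \<le> norm p + M * h" using Q_bnd[OF that] by simp
    finally show "norm (Q g t) \<le> norm p + M * h" .
  qed
  define P where "P g = Bcontfun (Q (apply_bcontfun g))" for g :: "real \<Rightarrow>\<^sub>C 'a"
  have P_app: "apply_bcontfun (P g) = Q (apply_bcontfun g)" for g
    unfolding P_def by (rule Bcontfun_inverse[OF Q_bc]) simp
  have contr: "dist (P g1) (P g2) \<le> (1/2) * dist g1 g2" for g1 g2
  proof (rule dist_bound)
    fix t
    have i1: "fg g1 integrable_on {t0..clamp t}" and i2: "fg g2 integrable_on {t0..clamp t}"
      by (intro integrable_continuous_interval fg_cont; simp)+
    have "dist (P g1 t) (P g2 t) = norm (integral {t0..clamp t} (fg g1) - integral {t0..clamp t} (fg g2))"
      unfolding P_app Q_def by (simp add: dist_norm)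
    also have "\<dots> = norm (integral {t0..clamp t} (\<lambda>s. fg g1 s - fg g2 s))"
      using integral_diff[OF i1 i2] by simp
    also have "\<dots> \<le> (L * dist g1 g2) * (clamp t - t0)"
    proof (rule integral_bound)
      show "t0 \<le> clamp t" using clamp_in[of t] by simp
      show "continuous_on {t0..clamp t} (\<lambda>s. fg g1 s - fg g2 s)"
        by (intro continuous_intros fg_cont) simp_all
      fix s assume s: "s \<in> {t0..clamp t}"
      then have s1: "s \<in> {t0..t0+1}" using clamp_in[of t] h1 by auto
      have "norm (fg g1 s - fg g2 s) \<le> L * norm (proj (g1 s) - proj (g2 s))"
        unfolding fg_def by (intro lip s1 proj_in)
      also have "\<dots> \<le> L * dist (g1 s) (g2 s)"
        using proj_lip[of "g1 s" "g2 s"] L by (simp add: dist_norm)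
      also have "\<dots> \<le> L * dist g1 g2" using L dist_bounded by (intro mult_left_mono) auto
      finally show "norm (fg g1 s - fg g2 s) \<le> L * dist g1 g2" .
    qed
    also have "\<dots> \<le> (L * dist g1 g2) * h"
      using clamp_in[of t] L by (intro mult_left_mono) auto
    also have "\<dots> = (h * L) * dist g1 g2" by simp
    also have "\<dots> \<le> (1/2) * dist g1 g2" using hL by (intro mult_right_mono) auto
    finally show "dist (P g1 t) (P g2 t) \<le> (1/2) * dist g1 g2" .
  qed
  have "\<exists>!g. P g = g"
    by (rule banach_fix_type[of "1/2"]) (use contr in auto)
  then obtain g0 where g0: "P g0 = g0" by blast
  define x where "x = apply_bcontfun g0"
  have xQ: "x t = Q x t" for t using fun_cong[OF P_app[of g0, unfolded g0], of t] unfolding x_def .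
  have xc: "continuous_on UNIV x" unfolding x_def by simp
  have x0: "x t0 = p" using xQ[of t0] unfolding Q_def clamp_def using hpos by simp
  have xball: "x t \<in> cball p r" if "t \<in> {t0..t0+h}" for t
  proof -
    have "norm (x t - p) \<le> M * h" using Q_bnd[OF xc, of t] unfolding xQ[of t, symmetric] .
    also have "\<dots> \<le> r" using hM by (simp add: mult.commute)
    finally show ?thesis by (simp add: dist_norm norm_minus_commute)
  qed
  have xder: "(x has_vector_derivative G t (x t)) (at t)" if t: "t \<in> {t0<..<t0+h}" for t
  proof -
    have tin: "t \<in> {t0..t0+h}" using t by auto
    have "((\<lambda>u. integral {t0..u} (fg x)) has_vector_derivative fg x t) (at t within {t0..t0+h})"
      by (intro integral_has_vector_derivative fg_cont xc tin)
    then have d1: "((\<lambda>u. p + integral {t0..u} (fg x)) has_vector_derivative fg x t) (at t within {t0..t0+h})"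
      by (intro derivative_eq_intros) auto
    have "(x has_vector_derivative fg x t) (at t within {t0..t0+h})"
    proof (rule has_vector_derivative_transform[OF tin _ d1])
      fix u assume "u \<in> {t0..t0+h}"
      then show "x u = p + integral {t0..u} (fg x)" using xQ[of u] clamp_id unfolding Q_def by simp
    qed
    moreover have "at t within {t0..t0+h} = at t"
      using t by (intro at_within_interior) simp
    moreover have "fg x t = G t (x t)" unfolding fg_def using proj_self xball tin by simp
    ultimately show ?thesis by simp
  qed
  show ?thesis using hpos xc x0 xball xder by blast
qed




lemma linear_norm_basis_bound:
  fixes D :: "'a::euclidean_space \<Rightarrow> 'b::real_normed_vector"
  assumes "linear D"
  shows "norm (D v) \<le> (\<Sum>i\<in>Basis. norm (D i)) * norm v"
proof -
  have "norm (D v) = norm (\<Sum>i\<in>Basis. (v \<bullet> i) *\<^sub>R D i)"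
    using linear_basis_expand[OF assms] by metis
  also have "\<dots> \<le> (\<Sum>i\<in>Basis. norm ((v \<bullet> i) *\<^sub>R D i))" by (rule norm_sum)
  also have "\<dots> \<le> (\<Sum>i\<in>Basis. norm v * norm (D i))"
  proof (rule sum_mono)
    fix i :: 'a assume "i \<in> Basis"
    then have "\<bar>v \<bullet> i\<bar> \<le> norm v" by (rule Basis_le_norm)
    then show "norm ((v \<bullet> i) *\<^sub>R D i) \<le> norm v * norm (D i)"
      by (simp add: mult_right_mono)
  qed
  also have "\<dots> = (\<Sum>i\<in>Basis. norm (D i)) * norm v" by (simp add: sum_distrib_left mult.commute)
  finally show ?thesis .
qed

lemma partial_deriv:
  fixes G :: "real \<Rightarrow> 'a::euclidean_space \<Rightarrow> 'a"
  assumes H: "smooth (\<lambda>(t, x). G t x)"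
  shows "(G s has_derivative (\<lambda>v. frechet_derivative (\<lambda>(t, x). G t x) (at (s, y)) (0, v))) (at y)"
proof -
  have p: "((\<lambda>y. (s, y)) has_derivative (\<lambda>v. (0, v))) (at y)"
    by (auto intro!: derivative_eq_intros)
  have "((\<lambda>y. (\<lambda>(t, x). G t x) (s, y)) has_derivative (\<lambda>v. frechet_derivative (\<lambda>(t, x). G t x) (at (s, y)) (0, v))) (at y)"
    using has_derivative_compose[OF p smooth_hasderiv[OF H]] by simp
  then show ?thesis by simp
qed

lemma ode_local:
  fixes G :: "real \<Rightarrow> 'a::euclidean_space \<Rightarrow> 'a"
  assumes tG: "tdep_vector_field G" and U: "open U" and pU: "p \<in> U"
  shows "\<exists>h>0. \<exists>x. continuous_on UNIV x \<and> x t0 = p \<and> x ` {t0<..<t0+h} \<subseteq> U \<and>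
           is_solution G {t0<..<t0+h} x"
proof -
  define H where "H = (\<lambda>(t, x). G t x)"
  have Hs: "smooth H" using tG unfolding tdep_vector_field_def H_def .
  obtain r where r: "r > 0" "cball p r \<subseteq> U" using U pU open_contains_cball by blast
  define K where "K = {t0..t0+1} \<times> cball p r"
  have K: "compact K" unfolding K_def by (intro compact_Times compact_cball compact_Icc)
  have "bounded (H ` K)"
    by (intro compact_imp_bounded compact_continuous_image K continuous_on_subset[OF smooth_continuous[OF Hs]]) simp
  then obtain B where B: "B > 0" "\<And>z. z \<in> K \<Longrightarrow> norm (H z) \<le> B"
    unfolding bounded_pos by auto
  define phi where "phi z = (\<Sum>i\<in>Basis. norm (frechet_derivative H (at z) (0, i)))" for z
  have phic: "continuous_on UNIV phi" unfolding phi_def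
    by (intro continuous_intros continuous_on_norm smooth_continuous smooth_deriv Hs)
  have "bounded (phi ` K)"
    by (intro compact_imp_bounded compact_continuous_image K continuous_on_subset[OF phic]) simp
  then obtain C where C: "C > 0" "\<And>z. z \<in> K \<Longrightarrow> norm (phi z) \<le> C"
    unfolding bounded_pos by auto
  have bnd: "norm (G s y) \<le> B" if "s \<in> {t0..t0+1}" "y \<in> cball p r" for s y
    using B(2)[of "(s, y)"] that unfolding K_def H_def by simp
  have lip: "norm (G s y - G s z) \<le> C * norm (y - z)"
    if s: "s \<in> {t0..t0+1}" and y: "y \<in> cball p r" and z: "z \<in> cball p r" for s y z
  proof -
    have "norm (G s y - G s z) \<le> C * norm (y - z)"
    proof (rule differentiable_bound[of "cball p r" "G s" "\<lambda>y v. frechet_derivative H (at (s, y)) (0, v)"])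
      show "convex (cball p r)" by simp
      show "y \<in> cball p r" "z \<in> cball p r" using y z .
      fix w assume w: "w \<in> cball p r"
      show "(G s has_derivative (\<lambda>v. frechet_derivative H (at (s, w)) (0, v))) (at w within cball p r)"
      proof (rule has_derivative_at_withinI)
        show "(G s has_derivative (\<lambda>v. frechet_derivative H (at (s, w)) (0, v))) (at w)"
          unfolding H_def by (rule partial_deriv[OF Hs[unfolded H_def]])
      qed
      have lin: "linear (\<lambda>v. frechet_derivative H (at (s, w)) (0, v))"
      proof -
        have "linear (frechet_derivative H (at (s, w)))" by (rule smooth_linear_deriv[OF Hs])
        moreover have "linear (\<lambda>v::'a. (0::real, v))" by (simp add: linearI)
        ultimately show ?thesis using linear_compose[of "\<lambda>v::'a. (0::real, v)" "frechet_derivative H (at (s, w))"]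
          by (simp add: o_def)
      qed
      show "onorm (\<lambda>v. frechet_derivative H (at (s, w)) (0, v)) \<le> C"
      proof (rule onorm_le)
        fix v :: 'a
        have "norm (frechet_derivative H (at (s, w)) (0, v)) \<le> phi (s, w) * norm v"
          unfolding phi_def using linear_norm_basis_bound[OF lin, of v] by simp
        also have "\<dots> \<le> C * norm v"
          using C(2)[of "(s, w)"] s w unfolding K_def by (intro mult_right_mono) auto
        finally show "norm (frechet_derivative H (at (s, w)) (0, v)) \<le> C * norm v" .
      qed
    qed
    then show ?thesis .
  qed
  have cont: "continuous_on UNIV (\<lambda>(t, x). G t x)" using smooth_continuous[OF Hs] unfolding H_def .
  obtain h x where h: "h > 0" and xc: "continuous_on UNIV x" and x0: "x t0 = p"
    and xb: "\<forall>t\<in>{t0..t0+h}. x t \<in> cball p r"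
    and xd: "\<forall>t\<in>{t0<..<t0+h}. (x has_vector_derivative G t (x t)) (at t)"
    using picard[OF cont r(1) B(1) C(1) bnd lip] by blast
  have "x ` {t0<..<t0+h} \<subseteq> U" using xb r(2) by auto
  moreover have "is_solution G {t0<..<t0+h} x"
    unfolding is_solution_def using xd h by (auto simp: is_interval_def)
  ultimately show ?thesis using h xc x0 by blast
qed




lemma dense_eq:
  fixes f g :: "'a::topological_space \<Rightarrow> 'b::t2_space"
  assumes "continuous_on UNIV f" "continuous_on UNIV g" "closure U = UNIV" "\<And>x. x \<in> U \<Longrightarrow> f x = g x"
  shows "f x = g x"
proof -
  have "closure U \<subseteq> {x. f x = g x}"
    by (intro closure_minimal closed_Collect_eq assms) (use assms(4) in auto)
  then show ?thesis using assms(3) by auto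
qed

lemma cont_apply_deriv:
  fixes F :: "'a::euclidean_space \<Rightarrow> 'b::euclidean_space"
  assumes F: "smooth F" and x: "continuous_on S x" and v: "continuous_on S v"
  shows "continuous_on S (\<lambda>t. frechet_derivative F (at (x t)) (v t))"
proof -
  have eq: "(\<lambda>t. frechet_derivative F (at (x t)) (v t)) = (\<lambda>t. \<Sum>i\<in>Basis. (v t \<bullet> i) *\<^sub>R frechet_derivative F (at (x t)) i)"
    using linear_basis_expand[OF smooth_linear_deriv[OF F]] by blast
  have c: "continuous_on S (\<lambda>t. \<Sum>i\<in>Basis. (v t \<bullet> i) *\<^sub>R frechet_derivative F (at (x t)) i)"
  proof (intro continuous_intros v)
    fix i :: 'a
    show "continuous_on S (\<lambda>t. frechet_derivative F (at (x t)) i)"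
      by (rule continuous_on_compose2[OF smooth_continuous[OF smooth_deriv[OF F]] x]) simp
  qed
  show ?thesis unfolding eq by (rule c)
qed

lemma base_related:
  fixes Xh :: "real \<Rightarrow> 'a::euclidean_space \<Rightarrow> 'a" and X :: "real \<Rightarrow> 'b::euclidean_space \<Rightarrow> 'b"
    and F :: "'a \<Rightarrow> 'b"
  assumes tXh: "tdep_vector_field Xh" and tX: "tdep_vector_field X" and F: "smooth F"
    and U: "open U" "closure U = UNIV"
    and sol: "\<And>I x. is_solution Xh I x \<Longrightarrow> x ` I \<subseteq> U \<Longrightarrow> is_solution X I (\<lambda>t. F (x t))"
  shows "related_fields F (Xh t0) (X t0)"
proof -
  have cXh: "continuous_on UNIV (\<lambda>(t, x). Xh t x)" by (rule tdep_cont[OF tXh])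
  have cX: "continuous_on UNIV (\<lambda>(t, x). X t x)" by (rule tdep_cont[OF tX])
  have onU: "frechet_derivative F (at p) (Xh t0 p) = X t0 (F p)" if pU: "p \<in> U" for p
  proof -
    obtain h x where h: "h > 0" and xc: "continuous_on UNIV x" and x0: "x t0 = p"
      and xU: "x ` {t0<..<t0+h} \<subseteq> U" and xs: "is_solution Xh {t0<..<t0+h} x"
      using ode_local[OF tXh U(1) pU, of t0] by blast
    have ys: "is_solution X {t0<..<t0+h} (\<lambda>t. F (x t))" by (rule sol[OF xs xU])
    define g1 where "g1 t = frechet_derivative F (at (x t)) (Xh t (x t))" for t
    define g2 where "g2 t = X t (F (x t))" for t
    have eqI: "g1 t = g2 t" if t: "t \<in> {t0<..<t0+h}" for t
    proof -
      have dx: "(x has_vector_derivative Xh t (x t)) (at t)" using xs t unfolding is_solution_def by blast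
      have dy: "((\<lambda>t. F (x t)) has_vector_derivative X t (F (x t))) (at t)" using ys t unfolding is_solution_def by blast
      have lF: "linear (frechet_derivative F (at (x t)))" by (rule smooth_linear_deriv[OF F])
      have "((\<lambda>t. F (x t)) has_derivative (\<lambda>d. frechet_derivative F (at (x t)) (d *\<^sub>R Xh t (x t)))) (at t)"
        using has_derivative_compose[OF dx[unfolded has_vector_derivative_def] smooth_hasderiv[OF F]] by simp
      then have "((\<lambda>t. F (x t)) has_vector_derivative frechet_derivative F (at (x t)) (Xh t (x t))) (at t)"
        unfolding has_vector_derivative_def using lF by (simp add: linear_scale)
      from vector_derivative_unique_at[OF this dy] show ?thesis unfolding g1_def g2_def .
    qed
    have c1: "continuous_on UNIV g1" unfolding g1_def
    proof (rule cont_apply_deriv[OF F xc])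
      show "continuous_on UNIV (\<lambda>t. Xh t (x t))"
        using continuous_on_compose2[OF cXh continuous_on_Pair[OF continuous_on_id xc]] by simp
    qed
    have c2: "continuous_on UNIV g2" unfolding g2_def
    proof -
      have "continuous_on UNIV (\<lambda>t. F (x t))"
        by (rule continuous_on_compose2[OF smooth_continuous[OF F] xc]) simp
      then show "continuous_on UNIV (\<lambda>t. X t (F (x t)))"
        using continuous_on_compose2[OF cX continuous_on_Pair[OF continuous_on_id]] by fastforce
    qed
    have "closure {t0<..<t0+h} \<subseteq> {t. g1 t = g2 t}"
      by (intro closure_minimal closed_Collect_eq c1 c2) (use eqI in auto)
    moreover have "t0 \<in> closure {t0<..<t0+h}" using h by simp
    ultimately have "g1 t0 = g2 t0" by auto
    then show ?thesis unfolding g1_def g2_def x0 .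
  qed
  show ?thesis unfolding related_fields_def
  proof
    fix p
    show "frechet_derivative F (at p) (Xh t0 p) = X t0 (F p)"
    proof (rule dense_eq[OF _ _ U(2) onU])
      show "continuous_on UNIV (\<lambda>p. frechet_derivative F (at p) (Xh t0 p))"
        by (rule cont_apply_deriv[OF F continuous_on_id smooth_continuous[OF tdep_smooth[OF tXh]]])
      show "continuous_on UNIV (\<lambda>p. X t0 (F p))"
        by (rule continuous_on_compose2[OF smooth_continuous[OF tdep_smooth[OF tX]] smooth_continuous[OF F]]) simp
    qed
  qed
qed




lemma related_unique:
  fixes F :: "'a::euclidean_space \<Rightarrow> 'b::euclidean_space"
  assumes d: "closure (range F) = UNIV" and F: "smooth F"
    and Y1: "smooth Y1" and Y2: "smooth Y2" and r1: "related_fields F Z Y1" and r2: "related_fields F Z Y2"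
  shows "Y1 = Y2"
proof
  fix y
  show "Y1 y = Y2 y"
  proof (rule dense_eq[OF smooth_continuous[OF Y1] smooth_continuous[OF Y2] d])
    fix x assume "x \<in> range F"
    then obtain p where "x = F p" by blast
    then show "Y1 x = Y2 x" using r1 r2 unfolding related_fields_def by metis
  qed
qed

lemma related_lin:
  fixes F :: "'a::euclidean_space \<Rightarrow> 'b::euclidean_space"
  assumes F: "smooth F" and r1: "related_fields F Z1 Y1" and r2: "related_fields F Z2 Y2"
  shows "related_fields F (\<lambda>x. a *\<^sub>R Z1 x + b *\<^sub>R Z2 x) (\<lambda>x. a *\<^sub>R Y1 x + b *\<^sub>R Y2 x)"
  unfolding related_fields_def
proof
  fix p
  have l: "linear (frechet_derivative F (at p))" by (rule smooth_linear_deriv[OF F])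
  show "frechet_derivative F (at p) (a *\<^sub>R Z1 p + b *\<^sub>R Z2 p) = a *\<^sub>R Y1 (F p) + b *\<^sub>R Y2 (F p)"
    using r1 r2 unfolding related_fields_def by (simp add: linear_add[OF l] linear_scale[OF l])
qed

lemma related_add:
  fixes F :: "'a::euclidean_space \<Rightarrow> 'b::euclidean_space"
  assumes F: "smooth F" and r1: "related_fields F Z1 Y1" and r2: "related_fields F Z2 Y2"
  shows "related_fields F (\<lambda>x. Z1 x + Z2 x) (\<lambda>x. Y1 x + Y2 x)"
  using related_lin[OF F r1 r2, of 1 1] by simp

lemma related_scale:
  fixes F :: "'a::euclidean_space \<Rightarrow> 'b::euclidean_space"
  assumes F: "smooth F" and r1: "related_fields F Z1 Y1"
  shows "related_fields F (\<lambda>x. c *\<^sub>R Z1 x) (\<lambda>x. c *\<^sub>R Y1 x)"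
  using related_lin[OF F r1 r1, of c 0] by simp

lemma related_zero:
  fixes F :: "'a::euclidean_space \<Rightarrow> 'b::euclidean_space"
  assumes F: "smooth F"
  shows "related_fields F (\<lambda>x. 0) (\<lambda>x. 0)"
  unfolding related_fields_def using linear_0[OF smooth_linear_deriv[OF F]] by simp

lemma lie_part:
  fixes F :: "'a::euclidean_space \<Rightarrow> 'b::euclidean_space"
    and Xh :: "real \<Rightarrow> 'a \<Rightarrow> 'a" and X :: "real \<Rightarrow> 'b \<Rightarrow> 'b"
  assumes F: "smooth F" and tXh: "tdep_vector_field Xh" and tX: "tdep_vector_field X"
    and d: "closure (range F) = UNIV" and rel: "\<And>t. related_fields F (Xh t) (X t)"
  shows "(\<forall>Z\<in>VX Xh. projectable F Z) \<and>
         (\<exists>T. lie_epimorphism T (VX Xh) (VX X) \<and>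
              (\<forall>Z\<in>VX Xh. related_fields F Z (T Z)) \<and>
              (\<forall>t. T (Xh t) = X t))"
proof -
  have sZ: "smooth Z" if "Z \<in> VX Xh" for Z
    using that unfolding VX_def by (rule smooth_lie_gen) (auto intro: tdep_smooth[OF tXh])
  have sY: "smooth Y" if "Y \<in> VX X" for Y
    using that unfolding VX_def by (rule smooth_lie_gen) (auto intro: tdep_smooth[OF tX])
  have ex: "\<exists>Y. Y \<in> VX X \<and> related_fields F Z Y" if "Z \<in> VX Xh" for Z
    using that unfolding VX_def
  proof (induction Z rule: lie_gen.induct)
    case (base Y)
    then obtain t where "Y = Xh t" by blast
    then show ?case using rel[of t] by (auto intro: lie_gen.base)
  next
    case zero
    then show ?case using related_zero[OF F] by (auto intro: lie_gen.zero)
  next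
    case (add Y Z)
    then show ?case using related_add[OF F] by (blast intro: lie_gen.add)
  next
    case (scale Y c)
    then show ?case using related_scale[OF F] by (blast intro: lie_gen.scale)
  next
    case (bracket Y Z)
    then obtain Y1 Y2 where "Y1 \<in> lie_gen (range X)" "related_fields F Y Y1" "Y2 \<in> lie_gen (range X)" "related_fields F Z Y2"
      by blast
    moreover have "smooth Y" "smooth Z" using bracket.hyps sZ unfolding VX_def by auto
    moreover have "smooth Y1" "smooth Y2" using calculation(1,3) sY unfolding VX_def by auto
    ultimately show ?case using related_bracket[OF F] by (blast intro: lie_gen.bracket)
  qed
  define T where "T Z = (SOME Y. smooth Y \<and> related_fields F Z Y)" for Z
  have Tprop: "smooth (T Z) \<and> related_fields F Z (T Z)" if Zin: "Z \<in> VX Xh" for Z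
  proof -
    obtain Y where "Y \<in> VX X" "related_fields F Z Y" using ex[OF Zin] by blast
    then have "\<exists>Y. smooth Y \<and> related_fields F Z Y" using sY by blast
    then show ?thesis unfolding T_def by (rule someI_ex)
  qed
  have Tuniq: "T Z = Y" if "Z \<in> VX Xh" "smooth Y" "related_fields F Z Y" for Z Y
    using related_unique[OF d F _ that(2) _ that(3)] Tprop[OF that(1)] by blast
  have TinV: "T Z \<in> VX X" if Zin: "Z \<in> VX Xh" for Z
  proof -
    obtain Y where "Y \<in> VX X" "related_fields F Z Y" using ex[OF Zin] by blast
    then show ?thesis using Tuniq[OF Zin sY] by auto
  qed
  have XhV: "Xh t \<in> VX Xh" for t unfolding VX_def by (auto intro: lie_gen.base)
  have Tbase: "T (Xh t) = X t" for t
    by (rule Tuniq[OF XhV tdep_smooth[OF tX] rel])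
  have lin: "T (\<lambda>x. a *\<^sub>R Y x + b *\<^sub>R Z x) = (\<lambda>x. a *\<^sub>R T Y x + b *\<^sub>R T Z x)"
    if "Y \<in> VX Xh" "Z \<in> VX Xh" for Y Z a b
  proof (rule Tuniq)
    show "(\<lambda>x. a *\<^sub>R Y x + b *\<^sub>R Z x) \<in> VX Xh"
      using that unfolding VX_def by (intro lie_gen.add lie_gen.scale)
    show "smooth (\<lambda>x. a *\<^sub>R T Y x + b *\<^sub>R T Z x)"
      using Tprop[OF that(1)] Tprop[OF that(2)] by (intro smooth_add smooth_cscale) auto
    show "related_fields F (\<lambda>x. a *\<^sub>R Y x + b *\<^sub>R Z x) (\<lambda>x. a *\<^sub>R T Y x + b *\<^sub>R T Z x)"
      using Tprop[OF that(1)] Tprop[OF that(2)] by (intro related_lin[OF F]) auto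
  qed
  have brk: "T (lie_bracket Y Z) = lie_bracket (T Y) (T Z)"
    if "Y \<in> VX Xh" "Z \<in> VX Xh" for Y Z
  proof (rule Tuniq)
    show "lie_bracket Y Z \<in> VX Xh"
      using that unfolding VX_def by (intro lie_gen.bracket)
    show "smooth (lie_bracket (T Y) (T Z))"
      using Tprop[OF that(1)] Tprop[OF that(2)] by (intro smooth_bracket) auto
    show "related_fields F (lie_bracket Y Z) (lie_bracket (T Y) (T Z))"
      using Tprop[OF that(1)] Tprop[OF that(2)] sZ[OF that(1)] sZ[OF that(2)]
      by (intro related_bracket[OF F]) auto
  qed
  have sup: "Y \<in> T ` VX Xh" if "Y \<in> VX X" for Y
    using that unfolding VX_def
  proof (induction Y rule: lie_gen.induct)
    case (base Y)
    then obtain t where "Y = X t" by blast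
    then have e: "Y = T (Xh t)" using Tbase[of t] by simp
    show ?case using XhV[of t] e unfolding VX_def by blast
  next
    case zero
    have z: "(\<lambda>x. 0) \<in> VX Xh" unfolding VX_def by (rule lie_gen.zero)
    have e: "(\<lambda>x. 0) = T (\<lambda>x. 0)" by (rule Tuniq[OF z smooth_const related_zero[OF F], symmetric])
    show ?case using z e unfolding VX_def by blast
  next
    case (add Y Z)
    then obtain Y' Z' where y: "Y' \<in> VX Xh" "Y = T Y'" and z: "Z' \<in> VX Xh" "Z = T Z'" unfolding VX_def by blast
    have "T (\<lambda>x. 1 *\<^sub>R Y' x + 1 *\<^sub>R Z' x) = (\<lambda>x. 1 *\<^sub>R T Y' x + 1 *\<^sub>R T Z' x)" by (rule lin[OF y(1) z(1)])
    then have e: "(\<lambda>x. Y x + Z x) = T (\<lambda>x. Y' x + Z' x)" using y z by simp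
    have m: "(\<lambda>x. Y' x + Z' x) \<in> VX Xh" using y z unfolding VX_def by (intro lie_gen.add)
    show ?case using m e unfolding VX_def by blast
  next
    case (scale Y c)
    then obtain Y' where y: "Y' \<in> VX Xh" "Y = T Y'" unfolding VX_def by blast
    have "T (\<lambda>x. c *\<^sub>R Y' x + 0 *\<^sub>R Y' x) = (\<lambda>x. c *\<^sub>R T Y' x + 0 *\<^sub>R T Y' x)" by (rule lin[OF y(1) y(1)])
    then have e: "(\<lambda>x. c *\<^sub>R Y x) = T (\<lambda>x. c *\<^sub>R Y' x)" using y by simp
    have m: "(\<lambda>x. c *\<^sub>R Y' x) \<in> VX Xh" using y unfolding VX_def by (intro lie_gen.scale)
    show ?case using m e unfolding VX_def by blast
  next
    case (bracket Y Z)
    then obtain Y' Z' where y: "Y' \<in> VX Xh" "Y = T Y'" and z: "Z' \<in> VX Xh" "Z = T Z'" unfolding VX_def by blast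
    have m: "lie_bracket Y' Z' \<in> VX Xh" using y z unfolding VX_def by (intro lie_gen.bracket)
    have e: "lie_bracket Y Z = T (lie_bracket Y' Z')" using brk[OF y(1) z(1)] y z by simp
    show ?case using m e unfolding VX_def by blast
  qed
  have epi: "lie_epimorphism T (VX Xh) (VX X)"
  proof -
    have "T ` VX Xh = VX X"
    proof
      show "T ` VX Xh \<subseteq> VX X" using TinV by blast
      show "VX X \<subseteq> T ` VX Xh" using sup by blast
    qed
    moreover have "\<forall>Y\<in>VX Xh. \<forall>Z\<in>VX Xh. \<forall>a b. T (\<lambda>x. a *\<^sub>R Y x + b *\<^sub>R Z x) = (\<lambda>x. a *\<^sub>R T Y x + b *\<^sub>R T Z x)"
      using lin by blast
    moreover have "\<forall>Y\<in>VX Xh. \<forall>Z\<in>VX Xh. T (lie_bracket Y Z) = lie_bracket (T Y) (T Z)"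
      using brk by blast
    ultimately show ?thesis unfolding lie_epimorphism_def by blast
  qed
  have proj: "\<forall>Z\<in>VX Xh. projectable F Z"
    unfolding projectable_def vector_field_def using Tprop by blast
  have "\<forall>Z\<in>VX Xh. related_fields F Z (T Z)" using Tprop by blast
  then show ?thesis using proj epi Tbase by blast
qed




definition pib :: "('N::finite \<Rightarrow> nat) \<Rightarrow> nat \<Rightarrow> real^'N \<Rightarrow> real^'N" where
  "pib blk a x = (\<chi> j. if blk j = a then x $ j else 0)"

lemma pib_lin: "linear (pib blk a)"
  unfolding pib_def by (rule linearI) (simp_all add: vec_eq_iff)
lemma pib_bl: "bounded_linear (pib blk a)"
  using pib_lin by (simp add: linear_linear)

lemma pib_idem: "pib blk a (pib blk a x) = pib blk a x"
  unfolding pib_def by (simp add: vec_eq_iff)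

lemma pib_ortho: "a \<noteq> b \<Longrightarrow> pib blk b (pib blk a x) = 0"
  unfolding pib_def by (simp add: vec_eq_iff)

definition blockf :: "('N::finite \<Rightarrow> nat) \<Rightarrow> nat \<Rightarrow> (real^'N \<Rightarrow> real^'N) \<Rightarrow> bool" where
  "blockf blk a Y \<longleftrightarrow> (\<forall>x. pib blk a (Y x) = Y x) \<and> (\<forall>x. Y x = Y (pib blk a x))"

lemma deriv_block_in:
  assumes Y: "smooth Y" and b: "\<And>x. Y x = Y (pib blk a x)"
  shows "frechet_derivative Y (at x) v = frechet_derivative Y (at (pib blk a x)) (pib blk a v)"
proof -
  have "((\<lambda>x. Y (pib blk a x)) has_derivative (\<lambda>v. frechet_derivative Y (at (pib blk a x)) (pib blk a v))) (at x)"
    using has_derivative_compose[OF bounded_linear.has_derivative[OF pib_bl has_derivative_ident] smooth_hasderiv[OF Y]]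
    by simp
  moreover have eqf: "(\<lambda>x. Y (pib blk a x)) = Y" by (rule ext) (rule b[symmetric])
  ultimately have hd: "(Y has_derivative (\<lambda>v. frechet_derivative Y (at (pib blk a x)) (pib blk a v))) (at x)"
    by simp
  show ?thesis using fun_cong[OF frechet_derivative_at[OF hd], of v] by simp
qed

lemma deriv_block_in2:
  assumes Y: "smooth Y" and b: "\<And>x. Y x = Y (pib blk a x)"
  shows "frechet_derivative Y (at x) v = frechet_derivative Y (at x) (pib blk a v)"
  using deriv_block_in[OF Y b, of x v] deriv_block_in[OF Y b, of x "pib blk a v"] by (simp add: pib_idem)

lemma deriv_block_out:
  assumes Y: "smooth Y" and b: "\<And>x. pib blk a (Y x) = Y x"
  shows "pib blk a (frechet_derivative Y (at x) v) = frechet_derivative Y (at x) v"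
proof -
  have "((\<lambda>x. pib blk a (Y x)) has_derivative (\<lambda>v. pib blk a (frechet_derivative Y (at x) v))) (at x)"
    using bounded_linear.has_derivative[OF pib_bl smooth_hasderiv[OF Y]] .
  then have hd: "(Y has_derivative (\<lambda>v. pib blk a (frechet_derivative Y (at x) v))) (at x)"
    using b by simp
  show ?thesis using fun_cong[OF frechet_derivative_at[OF hd], of v] by simp
qed

lemma bracket_block:
  assumes Y: "smooth Y" "blockf blk a Y" and Z: "smooth Z" "blockf blk a Z"
  shows "blockf blk a (lie_bracket Y Z)"
proof -
  have l: "linear (pib blk a)" by (rule pib_lin)
  have Yo: "\<And>x. pib blk a (Y x) = Y x" and Yi: "\<And>x. Y x = Y (pib blk a x)"
    and Zo: "\<And>x. pib blk a (Z x) = Z x" and Zi: "\<And>x. Z x = Z (pib blk a x)"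
    using Y Z unfolding blockf_def by auto
  have o: "pib blk a (lie_bracket Y Z x) = lie_bracket Y Z x" for x
    unfolding lie_bracket_def linear_diff[OF l]
    using deriv_block_out[OF Z(1) Zo] deriv_block_out[OF Y(1) Yo] by simp
  have i: "lie_bracket Y Z x = lie_bracket Y Z (pib blk a x)" for x
  proof -
    have "frechet_derivative Z (at x) (Y x) = frechet_derivative Z (at (pib blk a x)) (pib blk a (Y x))"
      by (rule deriv_block_in[OF Z(1) Zi])
    also have "\<dots> = frechet_derivative Z (at (pib blk a x)) (Y (pib blk a x))"
      by (simp only: Yo Yi[of x, symmetric])
    finally have 1: "frechet_derivative Z (at x) (Y x) = frechet_derivative Z (at (pib blk a x)) (Y (pib blk a x))" .
    have "frechet_derivative Y (at x) (Z x) = frechet_derivative Y (at (pib blk a x)) (pib blk a (Z x))"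
      by (rule deriv_block_in[OF Y(1) Yi])
    also have "\<dots> = frechet_derivative Y (at (pib blk a x)) (Z (pib blk a x))"
      by (simp only: Zo Zi[of x, symmetric])
    finally have 2: "frechet_derivative Y (at x) (Z x) = frechet_derivative Y (at (pib blk a x)) (Z (pib blk a x))" .
    note 1 2
    then show ?thesis unfolding lie_bracket_def by simp
  qed
  show ?thesis unfolding blockf_def using o i by blast
qed

lemma bracket_cross:
  assumes Y: "smooth Y" "blockf blk a Y" and Z: "smooth Z" "blockf blk b Z" and ab: "a \<noteq> b"
  shows "lie_bracket Y Z x = 0"
proof -
  have Yo: "\<And>x. pib blk a (Y x) = Y x" and Yi: "\<And>x. Y x = Y (pib blk a x)"
    and Zo: "\<And>x. pib blk b (Z x) = Z x" and Zi: "\<And>x. Z x = Z (pib blk b x)"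
    using Y Z unfolding blockf_def by auto
  have lZ: "linear (frechet_derivative Z (at x))" by (rule smooth_linear_deriv[OF Z(1)])
  have lY: "linear (frechet_derivative Y (at x))" by (rule smooth_linear_deriv[OF Y(1)])
  have "frechet_derivative Z (at x) (Y x) = frechet_derivative Z (at x) (pib blk b (pib blk a (Y x)))"
    using deriv_block_in2[OF Z(1) Zi, of x "Y x"] Yo by simp
  also have "\<dots> = 0" by (simp only: pib_ortho[OF ab] linear_0[OF lZ])
  finally have 1: "frechet_derivative Z (at x) (Y x) = 0" .
  have "frechet_derivative Y (at x) (Z x) = frechet_derivative Y (at x) (pib blk a (pib blk b (Z x)))"
    using deriv_block_in2[OF Y(1) Yi, of x "Z x"] Zo by simp
  also have "\<dots> = 0" by (simp only: pib_ortho[OF ab[symmetric]] linear_0[OF lY])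
  finally have 2: "frechet_derivative Y (at x) (Z x) = 0" .
  show ?thesis unfolding lie_bracket_def using 1 2 by simp
qed

lemma fd_sum:
  assumes "finite A" "\<And>a. a \<in> A \<Longrightarrow> smooth (Y a)"
  shows "frechet_derivative (\<lambda>x. \<Sum>a\<in>A. Y a x) (at x) v = (\<Sum>a\<in>A. frechet_derivative (Y a) (at x) v)"
proof -
  have hd: "((\<lambda>x. \<Sum>a\<in>A. Y a x) has_derivative (\<lambda>v. \<Sum>a\<in>A. frechet_derivative (Y a) (at x) v)) (at x)"
    by (intro has_derivative_sum smooth_hasderiv assms(2))
  show ?thesis using fun_cong[OF frechet_derivative_at[OF hd], of v] by simp
qed

lemma bracket_sum:
  assumes A: "finite A" and Y: "\<And>a. a \<in> A \<Longrightarrow> smooth (Y a)" and Z: "\<And>a. a \<in> A \<Longrightarrow> smooth (Z a)"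
  shows "lie_bracket (\<lambda>x. \<Sum>a\<in>A. Y a x) (\<lambda>x. \<Sum>b\<in>A. Z b x) x = (\<Sum>a\<in>A. \<Sum>b\<in>A. lie_bracket (Y a) (Z b) x)"
proof -
  have lZ: "linear (frechet_derivative (Z b) (at x))" if "b \<in> A" for b by (rule smooth_linear_deriv[OF Z[OF that]])
  have lY: "linear (frechet_derivative (Y a) (at x))" if "a \<in> A" for a by (rule smooth_linear_deriv[OF Y[OF that]])
  have "lie_bracket (\<lambda>x. \<Sum>a\<in>A. Y a x) (\<lambda>x. \<Sum>b\<in>A. Z b x) x =
    (\<Sum>b\<in>A. frechet_derivative (Z b) (at x) (\<Sum>a\<in>A. Y a x)) - (\<Sum>a\<in>A. frechet_derivative (Y a) (at x) (\<Sum>b\<in>A. Z b x))"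
    unfolding lie_bracket_def using fd_sum[OF A Z] fd_sum[OF A Y] by simp
  also have "\<dots> = (\<Sum>b\<in>A. \<Sum>a\<in>A. frechet_derivative (Z b) (at x) (Y a x)) - (\<Sum>a\<in>A. \<Sum>b\<in>A. frechet_derivative (Y a) (at x) (Z b x))"
  proof -
    have e1: "(\<Sum>b\<in>A. frechet_derivative (Z b) (at x) (\<Sum>a\<in>A. Y a x)) = (\<Sum>b\<in>A. \<Sum>a\<in>A. frechet_derivative (Z b) (at x) (Y a x))"
      by (rule sum.cong[OF refl]) (rule linear_sum[OF lZ])
    have e2: "(\<Sum>a\<in>A. frechet_derivative (Y a) (at x) (\<Sum>b\<in>A. Z b x)) = (\<Sum>a\<in>A. \<Sum>b\<in>A. frechet_derivative (Y a) (at x) (Z b x))"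
      by (rule sum.cong[OF refl]) (rule linear_sum[OF lY])
    show ?thesis by (simp only: e1 e2)
  qed
  also have "\<dots> = (\<Sum>a\<in>A. \<Sum>b\<in>A. frechet_derivative (Z b) (at x) (Y a x)) - (\<Sum>a\<in>A. \<Sum>b\<in>A. frechet_derivative (Y a) (at x) (Z b x))"
    by (subst sum.swap) (rule refl)
  also have "\<dots> = (\<Sum>a\<in>A. \<Sum>b\<in>A. frechet_derivative (Z b) (at x) (Y a x) - frechet_derivative (Y a) (at x) (Z b x))"
    by (simp only: sum_subtractf)
  also have "\<dots> = (\<Sum>a\<in>A. \<Sum>b\<in>A. lie_bracket (Y a) (Z b) x)" unfolding lie_bracket_def by simp
  finally show ?thesis .
qed




lemma VX_block:
  assumes tb: "tdep_vector_field (Xs a)" "block_tdep_field blk a (Xs a)"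
    and Y: "Y \<in> VX (Xs a)"
  shows "smooth Y \<and> blockf blk a Y"
  using Y unfolding VX_def
proof (induction Y rule: lie_gen.induct)
  case (base Y)
  then obtain t where Yt: "Y = Xs a t" by blast
  have o: "pib blk a (Xs a t x) = Xs a t x" for x
    using tb(2) unfolding block_tdep_field_def pib_def by (auto simp: vec_eq_iff)
  have i: "Xs a t x = Xs a t (pib blk a x)" for x
  proof -
    have "\<forall>j. blk j = a \<longrightarrow> x $ j = pib blk a x $ j" unfolding pib_def by simp
    then show ?thesis using tb(2) unfolding block_tdep_field_def by blast
  qed
  show ?case unfolding Yt blockf_def using o i tdep_smooth[OF tb(1)] by blast
next
  case zero
  show ?case unfolding blockf_def using smooth_const linear_0[OF pib_lin] by auto
next
  case (add Y Z)
  then show ?case unfolding blockf_def using smooth_add linear_add[OF pib_lin] by metis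
next
  case (scale Y c)
  then show ?case unfolding blockf_def using smooth_cscale linear_scale[OF pib_lin] by metis
next
  case (bracket Y Z)
  then show ?case using smooth_bracket bracket_block by blast
qed

lemma product_lie:
  fixes Xs :: "nat \<Rightarrow> real \<Rightarrow> real^'N::finite \<Rightarrow> real^'N"
  assumes tb: "\<And>a. a < m \<Longrightarrow> tdep_vector_field (Xs a) \<and> block_tdep_field blk a (Xs a)"
    and lie: "\<And>a. a < m \<Longrightarrow> lie_system (Xs a)"
  shows "lie_system (direct_product m Xs)"
proof -
  have tdp: "tdep_vector_field (direct_product m Xs)"
  proof -
    have "smooth (\<lambda>z. \<Sum>a<m. (\<lambda>(t, x). Xs a t x) z)"
      by (rule smooth_sum) (use tb in \<open>auto simp: tdep_vector_field_def\<close>)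
    moreover have "(\<lambda>z. \<Sum>a<m. (\<lambda>(t, x). Xs a t x) z) = (\<lambda>(t, x). direct_product m Xs t x)"
      unfolding direct_product_def by (auto simp: fun_eq_iff)
    ultimately show ?thesis unfolding tdep_vector_field_def by simp
  qed
  have sb: "smooth Y \<and> blockf blk a Y" if "a < m" "Y \<in> VX (Xs a)" for a Y
    using VX_block tb[OF that(1)] that(2) by blast
  define W where "W = {Z. \<exists>Y. (\<forall>a<m. Y a \<in> VX (Xs a)) \<and> Z = (\<lambda>x. \<Sum>a<m. Y a x)}"
  have WI: "Z \<in> W" if "\<forall>a<m. Y a \<in> VX (Xs a)" "Z = (\<lambda>x. \<Sum>a<m. Y a x)" for Y Z
    unfolding W_def using that by blast
  have inW: "Z \<in> W" if "Z \<in> VX (direct_product m Xs)" for Z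
    using that unfolding VX_def
  proof (induction Z rule: lie_gen.induct)
    case (base Z)
    then obtain t where "Z = direct_product m Xs t" by blast
    then have "Z = (\<lambda>x. \<Sum>a<m. Xs a t x)" unfolding direct_product_def by simp
    moreover have "\<forall>a<m. Xs a t \<in> VX (Xs a)" unfolding VX_def by (auto intro: lie_gen.base)
    ultimately show ?case by (intro WI[of "\<lambda>a. Xs a t"]) auto
  next
    case zero
    have "\<forall>a<m. (\<lambda>x. 0) \<in> VX (Xs a)" unfolding VX_def by (auto intro: lie_gen.zero)
    moreover have "(\<lambda>x::real^'N. 0::real^'N) = (\<lambda>x. \<Sum>a<m. (\<lambda>a x. 0::real^'N) a x)" by simp
    ultimately show ?case by (rule WI)
  next
    case (add Z1 Z2)
    then obtain Y1 Y2 where y1: "\<forall>a<m. Y1 a \<in> VX (Xs a)" "Z1 = (\<lambda>x. \<Sum>a<m. Y1 a x)"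
      and y2: "\<forall>a<m. Y2 a \<in> VX (Xs a)" "Z2 = (\<lambda>x. \<Sum>a<m. Y2 a x)" unfolding W_def by blast
    have "\<forall>a<m. (\<lambda>x. Y1 a x + Y2 a x) \<in> VX (Xs a)" using y1 y2 unfolding VX_def by (auto intro: lie_gen.add)
    moreover have "(\<lambda>x. Z1 x + Z2 x) = (\<lambda>x. \<Sum>a<m. (\<lambda>a x. Y1 a x + Y2 a x) a x)"
      unfolding y1(2) y2(2) by (simp add: sum.distrib)
    ultimately show ?case by (rule WI)
  next
    case (scale Z c)
    then obtain Y where y: "\<forall>a<m. Y a \<in> VX (Xs a)" "Z = (\<lambda>x. \<Sum>a<m. Y a x)" unfolding W_def by blast
    have "\<forall>a<m. (\<lambda>x. c *\<^sub>R Y a x) \<in> VX (Xs a)" using y unfolding VX_def by (auto intro: lie_gen.scale)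
    moreover have "(\<lambda>x. c *\<^sub>R Z x) = (\<lambda>x. \<Sum>a<m. (\<lambda>a x. c *\<^sub>R Y a x) a x)"
      unfolding y(2) by (simp add: scaleR_sum_right)
    ultimately show ?case by (rule WI)
  next
    case (bracket Z1 Z2)
    then obtain Y1 Y2 where y1: "\<forall>a<m. Y1 a \<in> VX (Xs a)" "Z1 = (\<lambda>x. \<Sum>a<m. Y1 a x)"
      and y2: "\<forall>a<m. Y2 a \<in> VX (Xs a)" "Z2 = (\<lambda>x. \<Sum>a<m. Y2 a x)" unfolding W_def by blast
    have "\<forall>a<m. lie_bracket (Y1 a) (Y2 a) \<in> VX (Xs a)" using y1 y2 unfolding VX_def by (auto intro: lie_gen.bracket)
    moreover have "lie_bracket Z1 Z2 = (\<lambda>x. \<Sum>a<m. (\<lambda>a. lie_bracket (Y1 a) (Y2 a)) a x)"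
    proof
      fix x
      have "lie_bracket Z1 Z2 x = (\<Sum>a<m. \<Sum>b<m. lie_bracket (Y1 a) (Y2 b) x)"
        unfolding y1(2) y2(2) by (rule bracket_sum) (use sb y1 y2 in auto)
      also have "\<dots> = (\<Sum>a<m. lie_bracket (Y1 a) (Y2 a) x)"
      proof (rule sum.cong[OF refl])
        fix a assume a: "a \<in> {..<m}"
        have "(\<Sum>b<m. lie_bracket (Y1 a) (Y2 b) x) = (\<Sum>b<m. if b = a then lie_bracket (Y1 a) (Y2 a) x else 0)"
        proof (rule sum.cong[OF refl])
          fix b assume b: "b \<in> {..<m}"
          show "lie_bracket (Y1 a) (Y2 b) x = (if b = a then lie_bracket (Y1 a) (Y2 a) x else 0)"
          proof (cases "b = a")
            case False
            have "lie_bracket (Y1 a) (Y2 b) x = 0"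
              using sb[of a "Y1 a"] sb[of b "Y2 b"] a b y1 y2 False
              by (intro bracket_cross[of "Y1 a" blk a "Y2 b" b]) auto
            then show ?thesis using False by simp
          qed simp
        qed
        also have "\<dots> = lie_bracket (Y1 a) (Y2 a) x" using a by (simp add: sum.delta)
        finally show "(\<Sum>b<m. lie_bracket (Y1 a) (Y2 b) x) = lie_bracket (Y1 a) (Y2 a) x" .
      qed
      finally show "lie_bracket Z1 Z2 x = (\<Sum>a<m. (\<lambda>a. lie_bracket (Y1 a) (Y2 a)) a x)" by simp
    qed
    ultimately show ?case by (rule WI)
  qed
  have "\<forall>a. \<exists>B. a < m \<longrightarrow> finite B \<and> (\<forall>Y\<in>VX (Xs a). \<exists>c. Y = (\<lambda>x. \<Sum>b\<in>B. c b *\<^sub>R b x))"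
    using lie unfolding lie_system_def fin_dim_fields_def by blast
  then have "\<exists>Bf. \<forall>a. a < m \<longrightarrow> finite (Bf a) \<and> (\<forall>Y\<in>VX (Xs a). \<exists>c. Y = (\<lambda>x. \<Sum>b\<in>Bf a. c b *\<^sub>R b x))"
    by (rule choice)
  then obtain Bf where Bf: "\<And>a. a < m \<Longrightarrow> finite (Bf a) \<and> (\<forall>Y\<in>VX (Xs a). \<exists>c. Y = (\<lambda>x. \<Sum>b\<in>Bf a. c b *\<^sub>R b x))"
    by blast
  define BB where "BB = (\<Union>a<m. Bf a)"
  have fBB: "finite BB" unfolding BB_def using Bf by auto
  have fd: "fin_dim_fields (VX (direct_product m Xs))"
    unfolding fin_dim_fields_def
  proof (rule exI[of _ BB], intro conjI ballI)
    show "finite BB" by (rule fBB)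
    fix Z assume "Z \<in> VX (direct_product m Xs)"
    then obtain Y where y: "\<forall>a<m. Y a \<in> VX (Xs a)" "Z = (\<lambda>x. \<Sum>a<m. Y a x)" using inW unfolding W_def by blast
    have "\<forall>a. \<exists>c. a < m \<longrightarrow> Y a = (\<lambda>x. \<Sum>b\<in>Bf a. c b *\<^sub>R b x)" using Bf y(1) by blast
    then have "\<exists>cf. \<forall>a. a < m \<longrightarrow> Y a = (\<lambda>x. \<Sum>b\<in>Bf a. cf a b *\<^sub>R b x)" by (rule choice)
    then obtain cf where cf: "\<And>a. a < m \<Longrightarrow> Y a = (\<lambda>x. \<Sum>b\<in>Bf a. cf a b *\<^sub>R b x)" by blast
    define c where "c b = (\<Sum>a<m. if b \<in> Bf a then cf a b else 0)" for b
    show "\<exists>c. Z = (\<lambda>x. \<Sum>b\<in>BB. c b *\<^sub>R b x)"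
    proof (rule exI[of _ c], rule ext)
      fix x
      have "(\<Sum>b\<in>BB. c b *\<^sub>R b x) = (\<Sum>b\<in>BB. \<Sum>a<m. (if b \<in> Bf a then cf a b *\<^sub>R b x else 0))"
        unfolding c_def scaleR_sum_left by (intro sum.cong refl) simp
      also have "\<dots> = (\<Sum>a<m. \<Sum>b\<in>BB. (if b \<in> Bf a then cf a b *\<^sub>R b x else 0))"
        by (rule sum.swap)
      also have "\<dots> = (\<Sum>a<m. \<Sum>b\<in>Bf a. cf a b *\<^sub>R b x)"
      proof (rule sum.cong[OF refl])
        fix a assume a: "a \<in> {..<m}"
        have "(\<Sum>b\<in>BB. (if b \<in> Bf a then cf a b *\<^sub>R b x else 0)) = (\<Sum>b\<in>BB \<inter> Bf a. cf a b *\<^sub>R b x)"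
          by (rule sum.inter_restrict[OF fBB, symmetric])
        also have "BB \<inter> Bf a = Bf a" unfolding BB_def using a by auto
        finally show "(\<Sum>b\<in>BB. (if b \<in> Bf a then cf a b *\<^sub>R b x else 0)) = (\<Sum>b\<in>Bf a. cf a b *\<^sub>R b x)" .
      qed
      also have "\<dots> = Z x" unfolding y(2) using cf by simp
      finally show "Z x = (\<Sum>b\<in>BB. c b *\<^sub>R b x)" by simp
    qed
  qed
  show ?thesis unfolding lie_system_def using tdp fd by blast
qed




theorem mainTheorem8:
  fixes X :: "real \<Rightarrow> real^'n::finite \<Rightarrow> real^'n"
    and Phi :: "real^'N::finite \<Rightarrow> real^'n \<Rightarrow> real^'n"
    and blk :: "'N \<Rightarrow> nat" and m :: nat
    and Xs :: "nat \<Rightarrow> real \<Rightarrow> real^'N \<Rightarrow> real^'N"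
    and k :: "real^'n"
  assumes msr: "mixed_superposition_rule X Phi blk m Xs"
    and lie: "\<forall>a<m. lie_system (Xs a)"
    and img_open: "open (range (\<lambda>p. Phi p k))"
    and img_dense: "closure (range (\<lambda>p. Phi p k)) = UNIV"
  shows "lie_system (direct_product m Xs) \<and>
         (\<forall>Z\<in>VX (direct_product m Xs). projectable (\<lambda>p. Phi p k) Z) \<and>
         (\<exists>T. lie_epimorphism T (VX (direct_product m Xs)) (VX X) \<and>
              (\<forall>Z\<in>VX (direct_product m Xs). related_fields (\<lambda>p. Phi p k) Z (T Z)) \<and>
              (\<forall>t. T (direct_product m Xs t) = X t))"
proof -
  have tX: "tdep_vector_field X" and tb: "\<And>a. a < m \<Longrightarrow> tdep_vector_field (Xs a) \<and> block_tdep_field blk a (Xs a)"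
    and sP: "smooth (\<lambda>(p, k). Phi p k)"
    using msr unfolding mixed_superposition_rule_def by auto
  obtain U where U: "open U" "closure U = UNIV"
    and sol: "\<And>I xhat. is_solution (direct_product m Xs) I xhat \<Longrightarrow> xhat ` I \<subseteq> U \<Longrightarrow>
            is_solution X I (\<lambda>t. Phi (xhat t) k)"
    using msr unfolding mixed_superposition_rule_def by blast
  have ls: "lie_system (direct_product m Xs)"
    by (rule product_lie[OF tb]) (use lie in auto)
  then have tXh: "tdep_vector_field (direct_product m Xs)" unfolding lie_system_def by blast
  have sF: "smooth (\<lambda>p. Phi p k)"
  proof -
    have bl: "bounded_linear (\<lambda>p::real^'N. (p, 0::real^'n))" by (simp add: bounded_linear_Pair)
    have "smooth (\<lambda>p. (\<lambda>(p, k). Phi p k) ((0, k) + (p, 0)))"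
      by (rule smooth_affine[OF bl sP])
    then show ?thesis by simp
  qed
  have rel: "related_fields (\<lambda>p. Phi p k) (direct_product m Xs t) (X t)" for t
    by (rule base_related[OF tXh tX sF U sol])
  have "(\<forall>Z\<in>VX (direct_product m Xs). projectable (\<lambda>p. Phi p k) Z) \<and>
         (\<exists>T. lie_epimorphism T (VX (direct_product m Xs)) (VX X) \<and>
              (\<forall>Z\<in>VX (direct_product m Xs). related_fields (\<lambda>p. Phi p k) Z (T Z)) \<and>
              (\<forall>t. T (direct_product m Xs t) = X t))"
    by (rule lie_part[OF sF tXh tX img_dense rel])
  then show ?thesis using ls by blast
qed


end
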